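(* Let $\mathbb{F}_q$ be a finite field of characteristic $p$, let $r,v,k,t$ be positive integers, and let $f(x):=x^r h_k(x^v)^t$ where $h_k(x):=x^{k-1}+x^{k-2}+\dots+1$. Let $s:=\gcd(v,q-1)$ and $d:=(q-1)/s$. If $d=1$ then $f$ permutes $\mathbb{F}_q$ if and only if $\gcd(k,p)=\gcd(r,s)=1$. If $d=2$ then $f$ permutes $\mathbb{F}_q$ if and only if $\gcd(k,2p)=\gcd(r,s)=1$ and $k^{st}\equiv (-1)^{r+1}\pmod{p}$.
   Context: A polynomial permutes $\mathbb{F}_q$ if the induced map $\mathbb{F}_q\to\mathbb{F}_q$ is a bijection. *)

theory Defs
  imports "HOL-Computational_Algebra.Polynomial" "HOL-Number_Theory.Cong"
begin

definition hk :: "nat \<Rightarrow> 'a::comm_ring_1 poly" where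
  "hk k = (\<Sum>i<k. monom 1 i)"

definition fpoly :: "nat \<Rightarrow> nat \<Rightarrow> nat \<Rightarrow> nat \<Rightarrow> 'a::comm_ring_1 poly" where
  "fpoly r v k t = monom 1 r * (pcompose (hk k) (monom 1 v)) ^ t"

definition permutes_field :: "'a::comm_ring_1 poly \<Rightarrow> bool" where
  "permutes_field f \<longleftrightarrow> bij (poly f)"

end

theory Submission
  imports Defs "HOL-Computational_Algebra.Primes"
begin
lemma poly_fpoly: "poly (fpoly r v k t) (x::'a::comm_ring_1) = x^r * (\<Sum>i<k. (x^v)^i)^t"
  by (simp add: fpoly_def hk_def poly_pcompose poly_monom poly_sum)

lemma sum_neg1: "(\<Sum>i<k. (-1::'a::comm_ring_1)^i) = (if even k then 0 else 1)"
  by (induction k) auto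

lemma fermat:
  fixes x :: "'a::{finite,field}"
  assumes "x \<noteq> 0"
  shows "x ^ (card (UNIV::'a set) - 1) = 1"
proof -
  let ?S = "UNIV - {0::'a}"
  have inj: "inj_on ((*) x) ?S" using assms by (auto simp: inj_on_def)
  have img: "(*) x ` ?S = ?S"
  proof
    show "(*) x ` ?S \<subseteq> ?S" using assms by auto
    show "?S \<subseteq> (*) x ` ?S"
    proof
      fix y assume "y \<in> ?S"
      then have "y = x * (y / x)" "y / x \<in> ?S" using assms by auto
      then show "y \<in> (*) x ` ?S" by blast
    qed
  qed
  have "prod id ?S = prod id ((*) x ` ?S)" using img by simp
  also have "\<dots> = prod (\<lambda>y. x * y) ?S" using prod.reindex[OF inj, of id] by simp
  also have "\<dots> = x ^ card ?S * prod id ?S" by (simp add: prod.distrib)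
  finally have "x ^ card ?S * prod id ?S = 1 * prod id ?S" by simp
  moreover have "prod id ?S \<noteq> 0" by simp
  ultimately have "x ^ card ?S = 1" by (metis mult_right_cancel)
  moreover have "card ?S = card (UNIV::'a set) - 1" by (simp add: card_Diff_subset)
  ultimately show ?thesis by simp
qed

lemma roots_bound:
  fixes a :: "'a::{comm_ring_1,ring_no_zero_divisors}"
  assumes "n > 0"
  shows "card {x. x ^ n = a} \<le> n"
proof -
  define P where "P = monom (1::'a) n - [:a:]"
  have "coeff P n = 1" using assms by (cases n) (simp_all add: P_def)
  then have "P \<noteq> 0" by auto
  then have "card {x. poly P x = 0} \<le> degree P" by (rule card_poly_roots_bound)
  moreover have "degree P \<le> n" unfolding P_def
    by (metis degree_diff_le degree_monom_le degree_pCons_0 le0)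
  moreover have "{x. poly P x = 0} = {x. x ^ n = a}" by (auto simp: P_def poly_monom)
  ultimately show ?thesis by simp
qed

lemma exists_nonroot:
  fixes dummy :: "'a::{finite,field}"
  assumes "n > 0" "n < card (UNIV::'a set) - 1"
  shows "\<exists>y::'a. y \<noteq> 0 \<and> y ^ n \<noteq> 1"
proof (rule ccontr)
  assume "\<not> ?thesis"
  then have "UNIV - {0::'a} \<subseteq> {x. x ^ n = 1}" by auto
  then have "card (UNIV - {0::'a}) \<le> card {x::'a. x ^ n = 1}" by (intro card_mono) auto
  also have "\<dots> \<le> n" using roots_bound assms(1) by blast
  finally show False using assms(2) by (simp add: card_Diff_subset)
qed

lemma cauchy_elem:
  fixes dummy :: "'a::{finite,field}"
  assumes "prime l" "l dvd card (UNIV::'a set) - 1"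
  shows "\<exists>z::'a. z \<noteq> 1 \<and> z ^ l = 1"
proof -
  define n where "n = (card (UNIV::'a set) - 1) div l"
  have l1: "l > 1" using assms(1) prime_gt_1_nat by blast
  have ln: "l * n = card (UNIV::'a set) - 1" using assms(2) by (simp add: n_def)
  have pos: "card (UNIV::'a set) - 1 > 0"
  proof -
    have "(0::'a) \<noteq> 1" by simp
    then have "card {0::'a, 1} \<le> card (UNIV::'a set)" by (intro card_mono) auto
    then show ?thesis by auto
  qed
  have "n > 0" using ln pos by (metis gr0I mult_0_right)
  moreover have "n < card (UNIV::'a set) - 1" using ln l1 \<open>n > 0\<close> by (metis lessI mult_less_mono1 mult_1)
  ultimately obtain y :: 'a where y: "y \<noteq> 0" "y ^ n \<noteq> 1" using exists_nonroot by blast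
  have "(y ^ n) ^ l = 1" using fermat[OF y(1)] ln by (metis mult.commute power_mult)
  then show ?thesis using y(2) by blast
qed

lemma pow_inj:
  fixes x y :: "'a::field"
  assumes "x \<noteq> 0" "y \<noteq> 0" "x ^ m = y ^ m" "x ^ n = y ^ n" "gcd m n = 1" "m > 0"
  shows "x = y"
proof -
  define z where "z = x / y"
  have zm: "z ^ m = 1" "z ^ n = 1" using assms by (auto simp: z_def power_divide)
  obtain a b where ab: "m * a = n * b + gcd m n" using bezout_nat[of m n] assms(6) by auto
  have "z ^ (m * a) = z ^ (n * b) * z" using ab assms(5) by (simp add: power_add)
  then have "z = 1" using zm by (simp add: power_mult)
  then show ?thesis using assms by (simp add: z_def)
qed

theorem proposition3p1:
  fixes r v k t :: nat
  assumes "r > 0" "v > 0" "k > 0" "t > 0"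
  defines "q \<equiv> card (UNIV :: 'a::{finite,field} set)"
      and "p \<equiv> CHAR('a)"
  defines "s \<equiv> gcd v (q - 1)"
  defines "d \<equiv> (q - 1) div s"
  shows "(d = 1 \<longrightarrow>
            (permutes_field (fpoly r v k t :: 'a poly) \<longleftrightarrow> gcd k p = 1 \<and> gcd r s = 1))
       \<and> (d = 2 \<longrightarrow>
            (permutes_field (fpoly r v k t :: 'a poly) \<longleftrightarrow>
               gcd k (2 * p) = 1 \<and> gcd r s = 1 \<and>
               [int k ^ (s * t) = (-1) ^ (r + 1)] (mod int p)))"
proof -
  define P where "P = (\<lambda>x::'a. poly (fpoly r v k t :: 'a poly) x)"
  define H where "H = (\<lambda>y::'a. \<Sum>i<k. y^i)"
  have Pdef: "\<And>x. P x = x^r * H (x^v) ^ t" by (simp add: P_def H_def poly_fpoly)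
  have perm: "permutes_field (fpoly r v k t :: 'a poly) \<longleftrightarrow> inj P"
    unfolding permutes_field_def P_def
    by (metis bij_def finite_UNIV_inj_surj finite_UNIV)
  have P0: "P 0 = 0" using assms(1) by (simp add: Pdef)
  have H1: "H 1 = of_nat k" by (simp add: H_def)
  have Hm1: "H (-1) = (if even k then 0 else 1)" by (simp add: H_def sum_neg1)
  have pprime: "prime p" unfolding p_def
    by (intro prime_CHAR_semidom finite_imp_CHAR_pos) simp
  have pdvd: "\<And>n. (of_nat n :: 'a) = 0 \<longleftrightarrow> p dvd n"
    by (simp add: p_def of_nat_eq_0_iff_char_dvd)
  have gkp: "gcd k p = 1 \<longleftrightarrow> \<not> p dvd k"
  proof
    assume g: "gcd k p = 1"
    show "\<not> p dvd k"
    proof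
      assume "p dvd k"
      then have "p dvd gcd k p" by simp
      then show False using g pprime by simp
    qed
  next
    assume "\<not> p dvd k"
    then have "coprime p k" using pprime prime_imp_coprime by blast
    then show "gcd k p = 1" by (simp add: coprime_commute)
  qed
  have q2: "q \<ge> 2"
  proof -
    have "(0::'a) \<noteq> 1" by simp
    then have "card {0::'a, 1} \<le> q" unfolding q_def by (intro card_mono) auto
    then show ?thesis by auto
  qed
  have spos: "s > 0" unfolding s_def using assms(2) by simp
  have sdvd: "s dvd q - 1" unfolding s_def by simp
  have ds: "d * s = q - 1" unfolding d_def using sdvd by simp
  have F: "\<And>x::'a. x \<noteq> 0 \<Longrightarrow> x ^ (q - 1) = 1" unfolding q_def by (rule fermat)
  have noninj: "\<not> inj P" if ng: "gcd r s \<noteq> 1" and Heq: "\<And>z::'a. z ^ s = 1 \<Longrightarrow> z \<noteq> 0 \<Longrightarrow> P z = z ^ r * P 1"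
  proof -
    have "gcd r s \<noteq> 0" using assms(1) by simp
    then obtain l where l: "prime l" "l dvd gcd r s"
      using prime_factor_nat[OF ng] by blast
    then have "l dvd q - 1" using sdvd by (meson dvd_trans gcd_dvd2)
    then obtain z :: 'a where z: "z \<noteq> 1" "z ^ l = 1" using cauchy_elem[OF l(1)] unfolding q_def by blast
    have "l dvd r" "l dvd s" using l(2) by (meson dvd_trans gcd_dvd1 gcd_dvd2)+
    then obtain a b where ab: "r = l * a" "s = l * b" by (auto elim!: dvdE)
    have zr: "z ^ r = 1" "z ^ s = 1" using z(2) ab by (simp_all add: power_mult)
    have "l > 0" using l(1) prime_gt_0_nat by blast
    then have "z \<noteq> 0" using z(2) by (cases l) auto
    then have "P z = P 1" using Heq[OF zr(2)] zr(1) by simp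
    then show ?thesis using z(1) injD[of P z 1] by auto
  qed
  show ?thesis
  proof (intro conjI impI)
    assume d1: "d = 1"
    then have ss: "s = q - 1" using ds by simp
    have xv: "\<And>x::'a. x \<noteq> 0 \<Longrightarrow> x ^ v = 1"
    proof -
      fix x :: 'a assume "x \<noteq> 0"
      have "q - 1 dvd v" using ss unfolding s_def by (metis gcd_dvd1)
      then obtain m where "v = (q - 1) * m" by blast
      then show "x ^ v = 1" using F[OF \<open>x \<noteq> 0\<close>] by (simp add: power_mult)
    qed
    have Px: "\<And>x. x \<noteq> 0 \<Longrightarrow> P x = x ^ r * of_nat k ^ t" using xv by (simp add: Pdef H1)
    show "permutes_field (fpoly r v k t :: 'a poly) \<longleftrightarrow> gcd k p = 1 \<and> gcd r s = 1"
    proof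
      assume "permutes_field (fpoly r v k t :: 'a poly)"
      then have inj: "inj P" using perm by simp
      have "\<not> p dvd k"
      proof
        assume "p dvd k"
        then have "P 1 = P 0" using Px[of 1] P0 pdvd assms(4) by simp
        then show False using inj injD[of P 1 0] by auto
      qed
      moreover have "gcd r s = 1"
      proof (rule ccontr)
        assume "gcd r s \<noteq> 1"
        moreover have "\<And>z::'a. z ^ s = 1 \<Longrightarrow> z \<noteq> 0 \<Longrightarrow> P z = z ^ r * P 1"
          using Px by simp
        ultimately show False using noninj inj by blast
      qed
      ultimately show "gcd k p = 1 \<and> gcd r s = 1" using gkp by simp
    next
      assume H: "gcd k p = 1 \<and> gcd r s = 1"
      then have c0: "(of_nat k :: 'a) ^ t \<noteq> 0" using gkp pdvd by simp
      have "inj P"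
      proof (rule injI)
        fix x y assume eq: "P x = P y"
        show "x = y"
        proof (cases "x = 0 \<or> y = 0")
          case True
          then show ?thesis using eq P0 Px c0 by (metis mult_eq_0_iff power_eq_0_iff)
        next
          case False
          then have "x ^ r * of_nat k ^ t = y ^ r * of_nat k ^ t" using eq Px by simp
          then have "x ^ r = y ^ r" using c0 mult_right_cancel by blast
          moreover have "x ^ s = y ^ s" using False F ss by simp
          ultimately show ?thesis using pow_inj[of x y r s] False H assms(1) by simp
        qed
      qed
      then show "permutes_field (fpoly r v k t :: 'a poly)" using perm by simp
    qed
  next
    assume d2: "d = 2"
    then have ss: "q - 1 = 2 * s" using ds by simp
    have m1: "(-1::'a) \<noteq> 1"
    proof
      assume m: "(-1::'a) = 1"
      have "s < q - 1" using ss spos by simp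
      then obtain y :: 'a where y: "y \<noteq> 0" "y ^ s \<noteq> 1" using exists_nonroot spos unfolding q_def by blast
      have "(y ^ s) ^ 2 = 1" using F[OF y(1)] ss by (metis mult.commute power_mult)
      then have "y ^ s = 1 \<or> y ^ s = -1" by (simp add: power2_eq_1_iff)
      then show False using m y(2) by auto
    qed
    obtain m where vm: "v = s * m" unfolding s_def by (metis gcd_dvd1 dvdE)
    have modd: "odd m"
    proof
      assume "even m"
      then have "2 * s dvd v" using vm by auto
      moreover have "2 * s dvd q - 1" using ss by simp
      ultimately have "2 * s dvd gcd v (q - 1)" by (rule gcd_greatest)
      then have "2 * s dvd s" unfolding s_def .
      then have "2 * s \<le> s" using spos by (intro dvd_imp_le) auto
      then show False using spos by simp
    qed
    have xs: "\<And>x::'a. x \<noteq> 0 \<Longrightarrow> x ^ s = 1 \<or> x ^ s = -1"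
    proof -
      fix x :: 'a assume "x \<noteq> 0"
      then have "(x ^ s) ^ 2 = 1" using F ss by (metis mult.commute power_mult)
      then show "x ^ s = 1 \<or> x ^ s = -1" by (simp add: power2_eq_1_iff)
    qed
    have xv: "\<And>x::'a. x \<noteq> 0 \<Longrightarrow> x ^ v = x ^ s"
    proof -
      fix x :: 'a assume "x \<noteq> 0"
      then show "x ^ v = x ^ s" using xs[of x] modd vm by (auto simp: power_mult)
    qed
    define c where "c = (of_nat k :: 'a) ^ t"
    have PA: "\<And>x. x \<noteq> 0 \<Longrightarrow> x ^ s = 1 \<Longrightarrow> P x = x ^ r * c"
      using xv by (simp add: Pdef H1 c_def)
    have PB: "\<And>x. x \<noteq> 0 \<Longrightarrow> x ^ s = -1 \<Longrightarrow> P x = x ^ r * (if even k then 0 else 1)"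
      using xv assms(4) by (simp add: Pdef Hm1)
    have cong_iff: "[int k ^ (s * t) = (-1) ^ (r + 1)] (mod int p) \<longleftrightarrow> c ^ s = (-1) ^ (r + 1)"
    proof -
      have "[int k ^ (s * t) = (-1) ^ (r + 1)] (mod int p) \<longleftrightarrow>
            (of_int (int k ^ (s * t)) :: 'a) = of_int ((-1) ^ (r + 1))"
        unfolding p_def by (rule of_int_eq_iff_cong_CHAR[symmetric])
      also have "\<dots> \<longleftrightarrow> c ^ s = (-1) ^ (r + 1)"
        by (simp add: c_def power_mult[symmetric] mult.commute)
      finally show ?thesis .
    qed
    have gk2: "gcd k (2 * p) = 1 \<longleftrightarrow> odd k \<and> \<not> p dvd k"
    proof -
      have "gcd k (2 * p) = 1 \<longleftrightarrow> coprime k (2 * p)" by (simp add: coprime_iff_gcd_eq_1)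
      also have "\<dots> \<longleftrightarrow> coprime k 2 \<and> coprime k p" by simp
      also have "\<dots> \<longleftrightarrow> odd k \<and> gcd k p = 1"
        using coprime_right_2_iff_odd[of k] coprime_iff_gcd_eq_1[of k p] by blast
      finally show ?thesis using gkp by simp
    qed
    have fin: "finite (UNIV :: 'a set)" by simp
    have cardS: "card (UNIV - {0::'a}) = 2 * s" using ss unfolding q_def by (simp add: card_Diff_subset)
    show "permutes_field (fpoly r v k t :: 'a poly) \<longleftrightarrow>
               gcd k (2 * p) = 1 \<and> gcd r s = 1 \<and>
               [int k ^ (s * t) = (-1) ^ (r + 1)] (mod int p)"
    proof
      assume "permutes_field (fpoly r v k t :: 'a poly)"
      then have inj: "inj P" using perm by simp
      have kodd: "odd k"
      proof
        assume "even k"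
        have "s < q - 1" using ss spos by simp
        then obtain y :: 'a where y: "y \<noteq> 0" "y ^ s \<noteq> 1" using exists_nonroot spos unfolding q_def by blast
        then have "y ^ s = -1" using xs by blast
        then have "P y = P 0" using PB[OF y(1)] P0 \<open>even k\<close> by simp
        then show False using y(1) inj injD[of P y 0] by auto
      qed
      have kp: "\<not> p dvd k"
      proof
        assume "p dvd k"
        then have "P 1 = P 0" using PA[of 1] P0 pdvd assms(4) by (simp add: c_def)
        then show False using inj injD[of P 1 0] by auto
      qed
      have c0: "c \<noteq> 0" using kp pdvd by (simp add: c_def)
      have grs: "gcd r s = 1"
      proof (rule ccontr)
        assume "gcd r s \<noteq> 1"
        moreover have "\<And>z::'a. z ^ s = 1 \<Longrightarrow> z \<noteq> 0 \<Longrightarrow> P z = z ^ r * P 1"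
          using PA by simp
        ultimately show False using noninj inj by blast
      qed
      have cs: "c ^ s = 1 \<or> c ^ s = -1" using xs[OF c0] .
      have "c ^ s \<noteq> (-1) ^ r"
      proof
        assume a: "c ^ s = (-1) ^ r"
        have "P ` (UNIV - {0}) \<subseteq> {y. y ^ s = (-1::'a) ^ r}"
        proof
          fix y assume "y \<in> P ` (UNIV - {0})"
          then obtain x where x: "x \<noteq> 0" "y = P x" by auto
          show "y \<in> {y. y ^ s = (-1::'a) ^ r}"
          proof (cases "x ^ s = 1")
            case True
            then show ?thesis using PA[OF x(1) True] x a
              by (simp add: power_mult_distrib power_mult[symmetric] mult.commute[of r s])
                 (simp add: power_mult True)
          next
            case False
            then have "x ^ s = -1" using xs x by blast
            then show ?thesis using PB[OF x(1)] x kodd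
              by (simp add: power_mult_distrib power_mult[symmetric] mult.commute[of r s])
                 (simp add: power_mult)
          qed
        qed
        then have "card (P ` (UNIV - {0})) \<le> card {y. y ^ s = (-1::'a) ^ r}"
          by (intro card_mono) auto
        also have "\<dots> \<le> s" using roots_bound spos by blast
        finally have "card (UNIV - {0::'a}) \<le> s"
          using card_image[OF inj_on_subset[OF inj]] by simp
        then show False using cardS spos by simp
      qed
      then have "c ^ s = (-1) ^ (r + 1)" using cs by (cases "even r") auto
      then show "gcd k (2 * p) = 1 \<and> gcd r s = 1 \<and>
               [int k ^ (s * t) = (-1) ^ (r + 1)] (mod int p)"
        using cong_iff gk2 kodd kp grs by simp
    next
      assume A: "gcd k (2 * p) = 1 \<and> gcd r s = 1 \<and>
               [int k ^ (s * t) = (-1) ^ (r + 1)] (mod int p)"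
      then have kodd: "odd k" and kp: "\<not> p dvd k" and grs: "gcd r s = 1"
        and cs: "c ^ s = (-1) ^ (r + 1)" using gk2 cong_iff by auto
      have c0: "c \<noteq> 0" using kp pdvd by (simp add: c_def)
      have PA': "\<And>x. x \<noteq> 0 \<Longrightarrow> x ^ s = 1 \<Longrightarrow> P x ^ s = (-1) ^ (r + 1)"
        using PA cs by (simp add: power_mult_distrib power_mult[symmetric] mult.commute[of r s])
                      (simp add: power_mult)
      have PB': "\<And>x. x \<noteq> 0 \<Longrightarrow> x ^ s = -1 \<Longrightarrow> P x ^ s = (-1) ^ r"
        using PB kodd by (simp add: power_mult_distrib power_mult[symmetric] mult.commute[of r s])
                      (simp add: power_mult)
      have Pnz: "\<And>x. x \<noteq> 0 \<Longrightarrow> P x \<noteq> 0"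
        using PA PB xs c0 kodd by fastforce
      have neq: "(-1::'a) ^ (r + 1) \<noteq> (-1) ^ r" using m1 by (cases "even r") auto
      have "inj P"
      proof (rule injI)
        fix x y assume eq: "P x = P y"
        show "x = y"
        proof (cases "x = 0 \<or> y = 0")
          case True
          then show ?thesis using eq P0 Pnz by metis
        next
          case False
          then have x0: "x \<noteq> 0" and y0: "y \<noteq> 0" by auto
          have sx: "x ^ s = y ^ s"
          proof (rule ccontr)
            assume ne: "x ^ s \<noteq> y ^ s"
            show False
            proof (cases "x ^ s = 1")
              case True
              then have "y ^ s = -1" using ne xs[OF y0] by auto
              then show False using PA'[OF x0 True] PB'[OF y0] eq neq by simp
            next
              case False
              then have "x ^ s = -1" "y ^ s = 1" using ne xs[OF y0] xs[OF x0] by auto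
              then show False using PB'[OF x0] PA'[OF y0] eq neq by simp
            qed
          qed
          have "x ^ r = y ^ r"
          proof (cases "x ^ s = 1")
            case True
            then show ?thesis using PA[OF x0 True] PA[OF y0] sx eq c0 by simp
          next
            case False
            then have "x ^ s = -1" using xs x0 by blast
            then show ?thesis using PB[OF x0] PB[OF y0] sx eq kodd by simp
          qed
          then show ?thesis using pow_inj[of x y r s] x0 y0 sx grs assms(1) by simp
        qed
      qed
      then show "permutes_field (fpoly r v k t :: 'a poly)" using perm by simp
    qed
  qed
qed

end
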